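(* Consider the following model. Particles occupy distinct nodes of the infinite regular triangular grid $G_\Delta$; the set of occupied nodes is connected and may contain holes (i.e., it need not be simply connected). Particles are anonymous, start in identical states, run the same deterministic algorithm, have constant memory and cannot move. Each particle has six ports, labelled $0,\dots,5$, one for each grid edge incident to its node, such that port $0$ leads to the East neighbour and port $3$ to the West neighbour for every particle (common direction), and ports $i$ and $i+1 \bmod 6$ lead to adjacent grid nodes; the circular orientation of the remaining labels (clockwise or counterclockwise) may differ from particle to particle (no common chirality). Particles communicate only by exchanging messages with particles at adjacent nodes, and both sender and receiver know the local port through which a message is sent/received. Then there is no terminating algorithm (one in which, after finitely many steps, every particle has irrevocably entered a final state, exactly one particle being in the final state leader) that solves Leader Election in every such configuration under a fair synchronous scheduler.
   Context: A fair synchronous scheduler activates all particles simultaneously in every step. In the triangular grid, the six neighbours of a node are in the directions East, West, North East, North West, South East and South West. Leader Election means that eventually exactly one particle is in the state leader. *)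

theory Defs
  imports Main
begin

text \<open>Nodes in axial coordinates. The six directions, in counterclockwise order:
  0 = East (1,0), 1 = North East (0,1), 2 = North West (-1,1),
  3 = West (-1,0), 4 = South West (0,-1), 5 = South East (1,-1).
  Consecutive directions (mod 6) lead to adjacent grid nodes.\<close>

type_synonym node = "int \<times> int"

definition dir_vec :: "nat \<Rightarrow> int \<times> int" where
  "dir_vec d = (case d mod 6 of
      0 \<Rightarrow> (1, 0) | Suc 0 \<Rightarrow> (0, 1) | Suc (Suc 0) \<Rightarrow> (-1, 1)
    | Suc (Suc (Suc 0)) \<Rightarrow> (-1, 0) | Suc (Suc (Suc (Suc 0))) \<Rightarrow> (0, -1)
    | _ \<Rightarrow> (1, -1))"

definition nb :: "node \<Rightarrow> nat \<Rightarrow> node" where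
  "nb v d = (fst v + fst (dir_vec d), snd v + snd (dir_vec d))"

definition grid_adj :: "node \<Rightarrow> node \<Rightarrow> bool" where
  "grid_adj u v \<longleftrightarrow> (\<exists>d<6. v = nb u d)"

definition grid_connected :: "node set \<Rightarrow> bool" where
  "grid_connected S \<longleftrightarrow>
     (\<forall>u\<in>S. \<forall>v\<in>S. (u, v) \<in> (Restr {(a, b). grid_adj a b} S)\<^sup>*)"

text \<open>Each particle has a chirality flag: True = counterclockwise labelling,
  False = clockwise labelling. Port 0 always leads East, port 3 always West.\<close>

definition port_dir :: "bool \<Rightarrow> nat \<Rightarrow> nat" where
  "port_dir ccw p = (if ccw then p mod 6 else (6 - p mod 6) mod 6)"

text \<open>The port of a particle with given chirality that leads in direction d
  (inverse of port_dir; the formula coincides).\<close>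

definition dir_port :: "bool \<Rightarrow> nat \<Rightarrow> nat" where
  "dir_port ccw d = (if ccw then d mod 6 else (6 - d mod 6) mod 6)"

text \<open>A deterministic anonymous algorithm: every particle starts in state init;
  in every round a particle in state q sends message send q p through each port p,
  then changes state depending on its state and on what it received through each port
  (None: no particle at that port).\<close>

record ('q, 'm) algorithm =
  init :: 'q
  send :: "'q \<Rightarrow> nat \<Rightarrow> 'm"
  trans :: "'q \<Rightarrow> (nat \<Rightarrow> 'm option) \<Rightarrow> 'q"
  final :: "'q set"
  leader :: 'q

definition terminating_alg :: "('q, 'm, 'z) algorithm_scheme \<Rightarrow> bool" where
  "terminating_alg A \<longleftrightarrow> leader A \<in> final A \<and>
     (\<forall>q\<in>final A. \<forall>inp. trans A q inp = q)"

text \<open>Execution under the fair synchronous scheduler (all particles are activated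
  in every step) on the configuration with occupied set S and chirality chi.\<close>

fun run :: "('q, 'm, 'z) algorithm_scheme \<Rightarrow> node set \<Rightarrow> (node \<Rightarrow> bool) \<Rightarrow> nat \<Rightarrow> node \<Rightarrow> 'q" where
  "run A S chi 0 = (\<lambda>v. init A)"
| "run A S chi (Suc t) = (\<lambda>v. trans A (run A S chi t v)
     (\<lambda>p. let d = port_dir (chi v) p; w = nb v d in
          if p < 6 \<and> w \<in> S
          then Some (send A (run A S chi t w) (dir_port (chi w) ((d + 3) mod 6)))
          else None))"

definition elected_at :: "('q, 'm, 'z) algorithm_scheme \<Rightarrow> node set \<Rightarrow> (node \<Rightarrow> bool) \<Rightarrow> nat \<Rightarrow> bool" where
  "elected_at A S chi t \<longleftrightarrow>
     (\<forall>v\<in>S. run A S chi t v \<in> final A) \<and>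
     card {v\<in>S. run A S chi t v = leader A} = 1"

definition solves_LE :: "('q, 'm, 'z) algorithm_scheme \<Rightarrow> bool" where
  "solves_LE A \<longleftrightarrow>
     (\<forall>S chi. finite S \<and> S \<noteq> {} \<and> grid_connected S \<longrightarrow> (\<exists>t. elected_at A S chi t))"

end

theory Submission imports Defs begin

definition hx :: "node list" where "hx = [(0,1),(1,0),(1,-1),(0,-1),(-1,0),(-1,1)]"
definition hn :: "nat \<Rightarrow> node" where "hn k = hx ! (k mod 6)"
definition bs :: "node list" where "bs = [(0,0),(0,1),(-1,2),(-2,2),(-3,3),(-3,4)]"
definition cp :: "nat \<Rightarrow> node" where
  "cp k = (fst (bs ! (k mod 6)) - 2 * int (k div 6), snd (bs ! (k mod 6)) + 4 * int (k div 6))"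
definition F2 :: "nat list" where "F2 = [1,2,3,2,1,0]"
definition B2 :: "nat list" where "B2 = [3,4,5,0,5,4]"
definition F1 :: "nat list" where "F1 = [5,4,3,2,1,0]"
definition B1 :: "nat list" where "B1 = [3,2,1,0,5,4]"
definition chi2 :: "node \<Rightarrow> bool" where "chi2 v = (2 * fst v + snd v < 0)"

lemma less6: "r < (6::nat) \<Longrightarrow> r = 0 \<or> r = 1 \<or> r = 2 \<or> r = 3 \<or> r = 4 \<or> r = 5" by auto

lemma split6: fixes k :: nat obtains j r where "k = 6 * j + r" "r < 6"
  by (metis div_mult_mod_eq mod_less_divisor zero_less_numeral mult.commute)

lemma cp_alt: "r < 6 \<Longrightarrow> cp (6 * j + r) = (fst (bs ! r) - 2 * int j, snd (bs ! r) + 4 * int j)"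
  by (simp add: cp_def)

lemma cp_step: "nb (cp k) (F2 ! (k mod 6)) = cp (Suc k)"
proof -
  obtain j r where k: "k = 6 * j + r" "r < 6" by (rule split6)
  show ?thesis
  proof (cases "r = 5")
    case True
    then have "Suc k = 6 * (Suc j) + 0" using k by simp
    then show ?thesis using k True by (simp only: cp_alt) (simp add: nb_def dir_vec_def F2_def bs_def cp_alt)
  next
    case False
    then have "Suc k = 6 * j + Suc r" "Suc r < 6" using k by simp_all
    then show ?thesis using k False by (simp only: cp_alt) (use less6[of r] in \<open>auto simp add: nb_def dir_vec_def F2_def bs_def cp_alt\<close>)
  qed
qed

lemma cp_back: "0 < k \<Longrightarrow> nb (cp k) (B2 ! (k mod 6)) = cp (k - 1)"
proof -
  assume "0 < k"
  obtain j r where k: "k = 6 * j + r" "r < 6" by (rule split6)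
  show ?thesis
  proof (cases "r = 0")
    case True
    then obtain i where "j = Suc i" using k \<open>0 < k\<close> by (cases j) auto
    then have "k - 1 = 6 * i + 5" using k True by simp
    then show ?thesis using k True \<open>j = Suc i\<close> by (simp only: cp_alt) (simp add: nb_def dir_vec_def B2_def bs_def cp_alt)
  next
    case False
    then have "k - 1 = 6 * j + (r - 1)" "r - 1 < 6" using k by simp_all
    then show ?thesis using k False by (simp only: cp_alt) (use less6[of r] in \<open>auto simp add: nb_def dir_vec_def B2_def bs_def cp_alt\<close>)
  qed
qed

lemma cp_nb_eq:
  assumes "d < 6" "nb (cp k) d = cp k'"
  shows "d = F2 ! (k mod 6) \<or> d = B2 ! (k mod 6)"
proof -
  obtain j r where k: "k = 6 * j + r" "r < 6" by (rule split6)
  obtain j' r' where k': "k' = 6 * j' + r'" "r' < 6" by (rule split6)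
  have e: "nb (fst (bs ! r) - 2 * int j, snd (bs ! r) + 4 * int j) d = (fst (bs ! r') - 2 * int j', snd (bs ! r') + 4 * int j')"
    using assms(2) k k' by (simp add: cp_alt)
  then have e1: "fst (bs ! r) - 2 * int j + fst (dir_vec d) = fst (bs ! r') - 2 * int j'"
    and e2: "snd (bs ! r) + 4 * int j + snd (dir_vec d) = snd (bs ! r') + 4 * int j'"
    by (simp_all add: nb_def)
  have kr: "k mod 6 = r" using k by simp
  show ?thesis unfolding kr using less6[OF k(2)] less6[OF k'(2)] less6[OF assms(1)] e1 e2
    apply (elim disjE)
    apply (simp_all add: dir_vec_def B2_def F2_def bs_def)
    apply presburger+
    done
qed

lemma chi2_cp: "chi2 (cp k) = (3 \<le> k mod 6)"
proof -
  obtain j r where k: "k = 6 * j + r" "r < 6" by (rule split6)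
  show ?thesis using k less6[of r] by (auto simp: cp_alt chi2_def bs_def)
qed

lemma cp_mem:
  assumes "0 < k" "Suc k < N" "d < 6"
  shows "(nb (cp k) d \<in> cp ` {..<N}) = (d = F2 ! (k mod 6) \<or> d = B2 ! (k mod 6))"
proof
  assume "nb (cp k) d \<in> cp ` {..<N}"
  then obtain k' where "nb (cp k) d = cp k'" by auto
  then show "d = F2 ! (k mod 6) \<or> d = B2 ! (k mod 6)" using cp_nb_eq assms(3) by blast
next
  assume "d = F2 ! (k mod 6) \<or> d = B2 ! (k mod 6)"
  then show "nb (cp k) d \<in> cp ` {..<N}"
  proof
    assume "d = F2 ! (k mod 6)"
    then show ?thesis using cp_step[of k] assms by auto
  next
    assume "d = B2 ! (k mod 6)"
    then show ?thesis using cp_back[of k] assms by auto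
  qed
qed

lemma nb_pair: "nb (a, b) d = (a + fst (dir_vec d), b + snd (dir_vec d))"
  by (simp add: nb_def)

lemma inp_eq:
  assumes k: "0 < k" "Suc k < N"
    and e: "s2 (cp (k - 1)) = s1 (hn (k - 1))" "s2 (cp k) = s1 (hn k)" "s2 (cp (Suc k)) = s1 (hn (Suc k))"
  shows "(\<lambda>p. let d = port_dir (chi2 (cp k)) p; w = nb (cp k) d in
            if p < 6 \<and> w \<in> cp ` {..<N}
            then Some (send A (s2 w) (dir_port (chi2 w) ((d + 3) mod 6))) else None)
       = (\<lambda>p. let d = port_dir True p; w = nb (hn k) d in
            if p < 6 \<and> w \<in> set hx
            then Some (send A (s1 w) (dir_port True ((d + 3) mod 6))) else None)"
proof (rule ext)
  fix p
  define r where "r = k mod 6"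
  have r6: "r < 6" by (simp add: r_def)
  have m1: "Suc k mod 6 = (r + 1) mod 6" unfolding r_def by (simp add: mod_Suc)
  have m2: "(k - 1) mod 6 = (r + 5) mod 6" unfolding r_def using k(1) by (cases k) (auto simp: mod_Suc)
  have c0: "chi2 (cp k) = (3 \<le> r)" by (simp add: chi2_cp r_def)
  have c1: "chi2 (cp (Suc k)) = (3 \<le> (r + 1) mod 6)" by (simp only: chi2_cp m1)
  have c2: "chi2 (cp (k - 1)) = (3 \<le> (r + 5) mod 6)" by (simp only: chi2_cp m2)
  have h0: "hn k = hx ! r" by (simp add: hn_def r_def)
  have h1: "hn (Suc k) = hx ! ((r + 1) mod 6)" by (simp only: hn_def m1)
  have h2: "hn (k - 1) = hx ! ((r + 5) mod 6)" by (simp only: hn_def m2)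
  have st1: "nb (cp k) (F2 ! r) = cp (Suc k)" using cp_step[of k] by (simp add: r_def)
  have st2: "nb (cp k) (B2 ! r) = cp (k - 1)" using cp_back[of k] k by (simp add: r_def)
  have mem: "\<And>d. d < 6 \<Longrightarrow> (nb (cp k) d \<in> cp ` {..<N}) = (d = F2 ! r \<or> d = B2 ! r)"
    using cp_mem[OF k] by (simp add: r_def)
  have memS: "cp (Suc k) \<in> cp ` {..<N}" "cp (k - 1) \<in> cp ` {..<N}" using k by auto
  show "(let d = port_dir (chi2 (cp k)) p; w = nb (cp k) d in
            if p < 6 \<and> w \<in> cp ` {..<N}
            then Some (send A (s2 w) (dir_port (chi2 w) ((d + 3) mod 6))) else None)
       = (let d = port_dir True p; w = nb (hn k) d in
            if p < 6 \<and> w \<in> set hx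
            then Some (send A (s1 w) (dir_port True ((d + 3) mod 6))) else None)"
  proof (cases "p < 6")
    case False then show ?thesis by (simp add: Let_def)
  next
    case True
    show ?thesis
      using less6[OF r6] less6[OF True] c0 c1 c2 h0 h1 h2 st1 st2 mem memS e
      apply (elim disjE)
      apply (hypsubst, simp add: Let_def port_dir_def dir_port_def F2_def B2_def hx_def nb_pair dir_vec_def)+
      done
  qed
qed

lemma sim:
  "\<forall>k. t \<le> k \<and> k + t < N \<longrightarrow>
     run A (cp ` {..<N}) chi2 t (cp k) = run A (set hx) (\<lambda>_. True) t (hn k)"
proof (induction t)
  case 0
  then show ?case by simp
next
  case (Suc t)
  show ?case
  proof (intro allI impI)
    fix k assume a: "Suc t \<le> k \<and> k + Suc t < N"
    then have k: "0 < k" "Suc k < N" by auto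
    have i0: "run A (cp ` {..<N}) chi2 t (cp (k - 1)) = run A (set hx) (\<lambda>_. True) t (hn (k - 1))"
    proof -
      have c: "t \<le> k - 1 \<and> k - 1 + t < N" using a by auto
      then show ?thesis using Suc.IH by blast
    qed
    have i1: "run A (cp ` {..<N}) chi2 t (cp k) = run A (set hx) (\<lambda>_. True) t (hn k)"
      using Suc.IH a by auto
    have i2: "run A (cp ` {..<N}) chi2 t (cp (Suc k)) = run A (set hx) (\<lambda>_. True) t (hn (Suc k))"
      using Suc.IH a by auto
    note eq = inp_eq[OF k i0 i1 i2, of A]
    show "run A (cp ` {..<N}) chi2 (Suc t) (cp k) = run A (set hx) (\<lambda>_. True) (Suc t) (hn k)"
      unfolding run.simps eq i1 by (rule refl)
  qed
qed

lemma conn_chain: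
  assumes "\<And>k. Suc k < n \<Longrightarrow> grid_adj (g k) (g (Suc k)) \<and> grid_adj (g (Suc k)) (g k)"
  shows "grid_connected (g ` {..<n})"
proof -
  let ?R = "Restr {(a, b). grid_adj a b} (g ` {..<n})"
  have *: "k < n \<Longrightarrow> (g 0, g k) \<in> ?R\<^sup>* \<and> (g k, g 0) \<in> ?R\<^sup>*" for k
  proof (induction k)
    case 0 then show ?case by simp
  next
    case (Suc k)
    then have a: "grid_adj (g k) (g (Suc k))" "grid_adj (g (Suc k)) (g k)" using assms by auto
    have m: "g k \<in> g ` {..<n}" "g (Suc k) \<in> g ` {..<n}" using Suc.prems by auto
    have e1: "(g k, g (Suc k)) \<in> ?R" using a m by auto
    have e2: "(g (Suc k), g k) \<in> ?R" using a m by auto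
    from Suc have ih: "(g 0, g k) \<in> ?R\<^sup>*" "(g k, g 0) \<in> ?R\<^sup>*" by auto
    show ?case using ih e1 e2 by (meson rtrancl.rtrancl_into_rtrancl converse_rtrancl_into_rtrancl)
  qed
  show ?thesis unfolding grid_connected_def
  proof (intro ballI)
    fix u v assume "u \<in> g ` {..<n}" "v \<in> g ` {..<n}"
    then obtain i j where "i < n" "j < n" "u = g i" "v = g j" by auto
    then show "(u, v) \<in> ?R\<^sup>*" using *[of i] *[of j] by (meson rtrancl_trans)
  qed
qed

lemma F2_lt: "F2 ! (k mod 6) < 6"
  using less6[of "k mod 6"] by (auto simp: F2_def)
lemma B2_lt: "B2 ! (k mod 6) < 6"
  using less6[of "k mod 6"] by (auto simp: B2_def)

lemma cp_conn: "grid_connected (cp ` {..<N})"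
proof (rule conn_chain)
  fix k
  have "grid_adj (cp k) (cp (Suc k))" unfolding grid_adj_def using cp_step[of k] F2_lt[of k] by metis
  moreover have "grid_adj (cp (Suc k)) (cp k)" unfolding grid_adj_def using cp_back[of "Suc k"] B2_lt[of "Suc k"] by (metis diff_Suc_1 zero_less_Suc)
  ultimately show "grid_adj (cp k) (cp (Suc k)) \<and> grid_adj (cp (Suc k)) (cp k)" by simp
qed

lemma hx_set: "set hx = hn ` {..<6}"
proof -
  have "{..<6::nat} = {0,1,2,3,4,5}" by auto
  then show ?thesis by (simp add: hn_def hx_def)
qed

lemma hx_step: assumes "r < 6" shows "nb (hx ! r) (F1 ! r) = hx ! ((r + 1) mod 6)"
  using less6[OF assms] by (elim disjE; simp add: nb_def dir_vec_def hx_def F1_def)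

lemma hx_back: assumes "r < 6" shows "nb (hx ! r) (B1 ! r) = hx ! ((r + 5) mod 6)"
  using less6[OF assms] by (elim disjE; simp add: nb_def dir_vec_def hx_def B1_def)

lemma F1_lt: "r < 6 \<Longrightarrow> F1 ! r < 6"
  using less6[of r] by (auto simp: F1_def)
lemma B1_lt: "r < 6 \<Longrightarrow> B1 ! r < 6"
  using less6[of r] by (auto simp: B1_def)

lemma hx_conn: "grid_connected (set hx)"
  unfolding hx_set
proof (rule conn_chain)
  fix k :: nat
  have m1: "Suc k mod 6 = (k mod 6 + 1) mod 6" by (simp add: mod_Suc)
  have m2: "k mod 6 = (Suc k mod 6 + 5) mod 6" by (simp add: mod_Suc)
  have "nb (hn k) (F1 ! (k mod 6)) = hn (Suc k)" unfolding hn_def m1 by (rule hx_step) simp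
  then have a1: "grid_adj (hn k) (hn (Suc k))" unfolding grid_adj_def using F1_lt[of "k mod 6"] by (metis mod_less_divisor zero_less_numeral)
  have "nb (hn (Suc k)) (B1 ! (Suc k mod 6)) = hn k" unfolding hn_def m2[symmetric] using hx_back[of "Suc k mod 6"] m2 by simp
  then have a2: "grid_adj (hn (Suc k)) (hn k)" unfolding grid_adj_def using B1_lt[of "Suc k mod 6"] by (metis mod_less_divisor zero_less_numeral)
  show "grid_adj (hn k) (hn (Suc k)) \<and> grid_adj (hn (Suc k)) (hn k)" using a1 a2 by simp
qed

lemma absorb:
  assumes "terminating_alg A" "run A S chi t v \<in> final A"
  shows "run A S chi (t + s) v = run A S chi t v"
proof (induction s)
  case 0 then show ?case by simp
next
  case (Suc s)
  have "run A S chi (t + Suc s) v = trans A (run A S chi (t + s) v) (\<lambda>p. let d = port_dir (chi v) p; w = nb v d in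
          if p < 6 \<and> w \<in> S
          then Some (send A (run A S chi (t + s) w) (dir_port (chi w) ((d + 3) mod 6)))
          else None)" by simp
  also have "\<dots> = run A S chi (t + s) v"
    using assms Suc.IH unfolding terminating_alg_def by simp
  finally show ?case using Suc.IH by simp
qed

lemma absorb_all:
  assumes "terminating_alg A" "\<forall>v\<in>S. run A S chi t v \<in> final A"
  shows "{v \<in> S. run A S chi (t + s) v = leader A} = {v \<in> S. run A S chi t v = leader A}"
  using absorb[OF assms(1)] assms(2) by auto

theorem theorem1:
  fixes A :: "('q::finite, 'm) algorithm"
  assumes "terminating_alg A"
  shows "\<not> solves_LE A"
proof
  assume sol: "solves_LE A"
  have ldr: "leader A \<in> final A" using assms unfolding terminating_alg_def by simp
  have "finite (set hx) \<and> set hx \<noteq> {} \<and> grid_connected (set hx)"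
    using hx_conn by (simp add: hx_def)
  then obtain T where el1: "elected_at A (set hx) (\<lambda>_. True) T"
    using sol unfolding solves_LE_def by blast
  then have "card {v \<in> set hx. run A (set hx) (\<lambda>_. True) T v = leader A} = 1"
    unfolding elected_at_def by simp
  then obtain u where "{v \<in> set hx. run A (set hx) (\<lambda>_. True) T v = leader A} = {u}"
    by (rule card_1_singletonE)
  then have u: "u \<in> set hx" "run A (set hx) (\<lambda>_. True) T u = leader A" by auto
  have lh: "length hx = 6" by (simp add: hx_def)
  obtain r0 where r0: "r0 < 6" "hx ! r0 = u" using u(1) lh by (metis in_set_conv_nth)
  define N where "N = 12 * (T + 2)"
  define k1 where "k1 = 6 * (T + 1) + r0"
  define k2 where "k2 = 6 * (T + 2) + r0"
  have "k1 mod 6 = r0" unfolding k1_def using r0(1) by presburger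
  then have hk1: "hn k1 = u" using r0 by (simp add: hn_def)
  have "k2 mod 6 = r0" unfolding k2_def using r0(1) by presburger
  then have hk2: "hn k2 = u" using r0 by (simp add: hn_def)
  have l1: "run A (cp ` {..<N}) chi2 T (cp k1) = leader A"
    using sim[of T N A] u hk1 r0(1) by (auto simp: N_def k1_def)
  have l2: "run A (cp ` {..<N}) chi2 T (cp k2) = leader A"
    using sim[of T N A] u hk2 r0(1) by (auto simp: N_def k2_def)
  have "finite (cp ` {..<N}) \<and> cp ` {..<N} \<noteq> {} \<and> grid_connected (cp ` {..<N})"
    using cp_conn[of N] by (auto simp: N_def lessThan_empty_iff)
  then obtain T2 where el2: "elected_at A (cp ` {..<N}) chi2 T2"
    using sol unfolding solves_LE_def by blast
  let ?L = "{v \<in> cp ` {..<N}. run A (cp ` {..<N}) chi2 T2 v = leader A}"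
  have c: "card ?L = 1" using el2 unfolding elected_at_def by simp
  have eqL: "{v \<in> cp ` {..<N}. run A (cp ` {..<N}) chi2 (T2 + T) v = leader A} = ?L"
    using absorb_all[OF assms] el2 unfolding elected_at_def by blast
  have "k1 < N" "k2 < N" using r0(1) by (simp_all add: N_def k1_def k2_def)
  then have m1: "cp k1 \<in> cp ` {..<N}" "cp k2 \<in> cp ` {..<N}" by auto
  have "run A (cp ` {..<N}) chi2 (T + T2) (cp k1) = leader A"
    using absorb[OF assms, of "cp ` {..<N}" chi2 T "cp k1" T2] l1 ldr by simp
  then have "cp k1 \<in> ?L" using eqL m1 by (auto simp: add.commute)
  moreover have "run A (cp ` {..<N}) chi2 (T + T2) (cp k2) = leader A"
    using absorb[OF assms, of "cp ` {..<N}" chi2 T "cp k2" T2] l2 ldr by simp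
  then have "cp k2 \<in> ?L" using eqL m1 by (auto simp: add.commute)
  moreover have "cp k1 \<noteq> cp k2"
    unfolding k1_def k2_def using cp_alt[OF r0(1), of "T + 1"] cp_alt[OF r0(1), of "T + 2"] by simp
  ultimately show False using c by (metis card_1_singletonE singletonD)
qed

end
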